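(* Fix an input $X=[x_1,\dots,x_T]$ with $\|x_t\|_2\le R_x$ and an initial state $h_0\in[-1,1]^{\hat D}$. Let $\theta=(W,U)$ and $\theta+\delta=(W+\delta_W,U+\delta_U)$, and let $h_T=h_T(\theta)$, $h_T'=h_T(\theta+\delta)$ be the FastRNN final states on $X$ with $\beta=1-\alpha$. Then $$\|h_T'-h_T\|_2\le \alpha\big(\sqrt{\hat D}\|\delta_U\|_2+R_x\|\delta_W\|_2\big)\sum_{j=0}^{T-1}(\alpha\|U\|_2+\beta)^j,$$ and if moreover $\alpha\le \frac{1}{T\,|\|U\|_2-1|}$, then $$\|h_T'-h_T\|_2\le 2\alpha T\big(\sqrt{\hat D}\|\delta_U\|_2+R_x\|\delta_W\|_2\big).$$
   Context: FastRNN recursion: $h_t=\alpha\,\sigma(Wx_t+Uh_{t-1})+\beta h_{t-1}$ with $W\in\mathbb R^{\hat D\times D}$, $U\in\mathbb R^{\hat D\times\hat D}$, $0\le\alpha,\beta\le1$, and $\sigma$ a coordinatewise $1$-Lipschitz nonlinearity taking values in $[-1,1]$. Norms on matrices are spectral norms. *)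

theory Defs
  imports "HOL-Analysis.Analysis"
begin

definition spec_norm :: "real^'n^'m \<Rightarrow> real" where
  "spec_norm A = onorm (\<lambda>v. A *v v)"

fun fastrnn :: "(real \<Rightarrow> real) \<Rightarrow> real \<Rightarrow> real \<Rightarrow> real^'d^'h \<Rightarrow> real^'h^'h
    \<Rightarrow> (nat \<Rightarrow> real^'d) \<Rightarrow> real^'h \<Rightarrow> nat \<Rightarrow> real^'h" where
  "fastrnn \<sigma> \<alpha> \<beta> W U x h0 0 = h0"
| "fastrnn \<sigma> \<alpha> \<beta> W U x h0 (Suc t) =
     \<alpha> *\<^sub>R (\<chi> i. \<sigma> ((W *v x (Suc t) + U *v fastrnn \<sigma> \<alpha> \<beta> W U x h0 t) $ i))
     + \<beta> *\<^sub>R fastrnn \<sigma> \<alpha> \<beta> W U x h0 t"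

end

theory Submission
  imports Defs
begin

lemma exp_lin: "0 \<le> (y::real) \<Longrightarrow> y \<le> 1 \<Longrightarrow> exp y \<le> 1 + 2*y"
proof -
  assume y: "0 \<le> y" "y \<le> 1"
  have "exp ((1-y) *\<^sub>R 0 + y *\<^sub>R 1) \<le> (1-y)*exp 0 + y * exp 1"
    using y by (intro convex_onD[OF exp_convex]) auto
  moreover have "y * exp 1 \<le> y * 3" using exp_le y by (intro mult_left_mono) auto
  ultimately show ?thesis by simp
qed

lemma pow_lin: "0 \<le> (c::real) \<Longrightarrow> c * real j \<le> 1 \<Longrightarrow> (1+c)^j \<le> 1 + 2*c*real j"
proof -
  assume c: "0 \<le> c" "c * real j \<le> 1"
  have "(1+c)^j \<le> exp c ^ j" by (intro power_mono) (auto simp: c exp_ge_add_one_self)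
  also have "\<dots> = exp (c * real j)" by (simp add: exp_of_nat2_mult)
  also have "\<dots> \<le> 1 + 2*(c*real j)" using c by (intro exp_lin) auto
  finally show ?thesis by simp
qed

lemma gauss2: "2 * (\<Sum>j<T. real j) \<le> real T * real T"
  by (induction T) (auto simp: algebra_simps)

lemma sum_lin: "0 \<le> (c::real) \<Longrightarrow> c * real T \<le> 1 \<Longrightarrow> 0 \<le> q \<Longrightarrow> q \<le> 1 + c \<Longrightarrow> (\<Sum>j<T. q^j) \<le> 2 * real T"
proof -
  assume c: "0 \<le> c" "c * real T \<le> 1" "0 \<le> q" "q \<le> 1 + c"
  have "(\<Sum>j<T. q^j) \<le> (\<Sum>j<T. 1 + 2*c*real j)"
  proof (intro sum_mono)
    fix j assume "j \<in> {..<T}"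
    then have "c * real j \<le> 1" using c by (smt (verit) lessThan_iff mult_left_mono of_nat_less_iff)
    then have "(1+c)^j \<le> 1 + 2*c*real j" using c pow_lin by blast
    moreover have "q^j \<le> (1+c)^j" using c by (intro power_mono) auto
    ultimately show "q^j \<le> 1 + 2*c*real j" by linarith
  qed
  also have "\<dots> = real T + c * (2 * (\<Sum>j<T. real j))" by (simp add: sum.distrib sum_distrib_left algebra_simps)
  also have "\<dots> \<le> real T + c * (real T * real T)"
    using c gauss2 by (intro add_left_mono mult_left_mono) auto
  also have "\<dots> = real T + (c * real T) * real T" by simp
  also have "\<dots> \<le> real T + 1 * real T" using c by (intro add_left_mono mult_right_mono) auto
  finally show ?thesis by simp
qed

lemma sig_vec: fixes a b :: "real^'h"
  assumes "\<And>a b. \<bar>\<sigma> a - \<sigma> b\<bar> \<le> \<bar>a - b\<bar>"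
  shows "norm ((\<chi> i. \<sigma> (a$i)) - (\<chi> i. \<sigma> (b$i))) \<le> norm (a - b)"
  unfolding norm_vec_def by (intro L2_set_mono) (auto simp: assms)

lemma box_norm: fixes v :: "real^'h"
  assumes "\<And>i. \<bar>v$i\<bar> \<le> 1" shows "norm v \<le> sqrt (real CARD('h))"
proof -
  have "norm v = sqrt (\<Sum>i\<in>UNIV. (v$i)^2)" by (simp add: norm_vec_def L2_set_def)
  also have "\<dots> \<le> sqrt (\<Sum>i\<in>(UNIV::'h set). 1)"
    using assms by (intro real_sqrt_le_mono sum_mono) (simp add: abs_le_square_iff abs_square_le_1)
  finally show ?thesis by simp
qed

lemma op_bd: "norm (A *v v) \<le> spec_norm A * norm v"
  unfolding spec_norm_def by (rule onorm[OF matrix_vector_mul_bounded_linear])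

lemma spec_nn: "0 \<le> spec_norm A"
  unfolding spec_norm_def by (rule onorm_pos_le[OF matrix_vector_mul_bounded_linear])

lemma box_inv:
  assumes "\<And>a. \<bar>\<sigma> a\<bar> \<le> 1" "0 \<le> \<alpha>" "\<alpha> \<le> 1" "\<beta> = 1 - \<alpha>" "\<And>i. \<bar>h0 $ i\<bar> \<le> 1"
  shows "\<bar>fastrnn \<sigma> \<alpha> \<beta> W U x h0 t $ i\<bar> \<le> 1"
proof (induction t arbitrary: i)
  case 0 then show ?case using assms by simp
next
  case (Suc t)
  let ?s = "\<sigma> ((W *v x (Suc t) + U *v fastrnn \<sigma> \<alpha> \<beta> W U x h0 t) $ i)"
  have "\<bar>\<alpha> * ?s + \<beta> * fastrnn \<sigma> \<alpha> \<beta> W U x h0 t $ i\<bar> \<le> \<alpha> * \<bar>?s\<bar> + \<beta> * \<bar>fastrnn \<sigma> \<alpha> \<beta> W U x h0 t $ i\<bar>"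
    using assms by (simp add: abs_triangle_ineq abs_mult order_trans[OF abs_triangle_ineq])
  also have "\<dots> \<le> \<alpha> * 1 + \<beta> * 1" using assms Suc by (intro add_mono mult_left_mono) auto
  finally show ?case using assms by simp
qed

theorem mainTheorem4:
  fixes \<sigma> :: "real \<Rightarrow> real" and \<alpha> \<beta> Rx :: real and T :: nat
    and W dW :: "real^'d^'h" and U dU :: "real^'h^'h"
    and x :: "nat \<Rightarrow> real^'d" and h0 :: "real^'h"
  assumes sigma_lip: "\<And>a b. \<bar>\<sigma> a - \<sigma> b\<bar> \<le> \<bar>a - b\<bar>"
    and sigma_bd: "\<And>a. \<bar>\<sigma> a\<bar> \<le> 1"
    and alpha: "0 \<le> \<alpha>" "\<alpha> \<le> 1"
    and beta: "\<beta> = 1 - \<alpha>"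
    and x_bd: "\<And>t. 1 \<le> t \<Longrightarrow> t \<le> T \<Longrightarrow> norm (x t) \<le> Rx"
    and h0_box: "\<And>i. \<bar>h0 $ i\<bar> \<le> 1"
  shows "norm (fastrnn \<sigma> \<alpha> \<beta> (W + dW) (U + dU) x h0 T - fastrnn \<sigma> \<alpha> \<beta> W U x h0 T)
           \<le> \<alpha> * (sqrt (real CARD('h)) * spec_norm dU + Rx * spec_norm dW)
               * (\<Sum>j<T. (\<alpha> * spec_norm U + \<beta>) ^ j)
       \<and> (\<alpha> * real T * \<bar>spec_norm U - 1\<bar> \<le> 1 \<longrightarrow>
          norm (fastrnn \<sigma> \<alpha> \<beta> (W + dW) (U + dU) x h0 T - fastrnn \<sigma> \<alpha> \<beta> W U x h0 T)
           \<le> 2 * \<alpha> * real T * (sqrt (real CARD('h)) * spec_norm dU + Rx * spec_norm dW))"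
proof -
  define h where "h = fastrnn \<sigma> \<alpha> \<beta> W U x h0"
  define h' where "h' = fastrnn \<sigma> \<alpha> \<beta> (W + dW) (U + dU) x h0"
  define K where "K = sqrt (real CARD('h)) * spec_norm dU + Rx * spec_norm dW"
  define q where "q = \<alpha> * spec_norm U + \<beta>"
  have q0: "0 \<le> q" unfolding q_def using alpha beta spec_nn[of U] by simp
  have step: "norm (h' (Suc t) - h (Suc t)) \<le> \<alpha> * K + q * norm (h' t - h t)" if t: "t < T" for t
  proof -
    let ?a' = "(W + dW) *v x (Suc t) + (U + dU) *v h' t"
    let ?a = "W *v x (Suc t) + U *v h t"
    have eq: "h' (Suc t) - h (Suc t) = \<alpha> *\<^sub>R ((\<chi> i. \<sigma> (?a'$i)) - (\<chi> i. \<sigma> (?a$i))) + \<beta> *\<^sub>R (h' t - h t)"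
      unfolding h_def h'_def by (simp add: algebra_simps)
    have ad: "?a' - ?a = dW *v x (Suc t) + dU *v h' t + U *v (h' t - h t)"
      by (simp add: matrix_vector_mult_add_rdistrib matrix_vector_right_distrib matrix_vector_mult_diff_distrib algebra_simps)
    have xb: "norm (x (Suc t)) \<le> Rx" using t by (intro x_bd) auto
    have hb: "norm (h' t) \<le> sqrt (real CARD('h))"
      unfolding h'_def by (intro box_norm box_inv[OF sigma_bd alpha beta h0_box])
    have "norm (?a' - ?a) \<le> norm (dW *v x (Suc t)) + norm (dU *v h' t) + norm (U *v (h' t - h t))"
      unfolding ad by (meson norm_triangle_le add_mono order_refl)
    also have "\<dots> \<le> spec_norm dW * Rx + spec_norm dU * sqrt (real CARD('h)) + spec_norm U * norm (h' t - h t)"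
      using op_bd[of dW "x (Suc t)"] op_bd[of dU "h' t"] op_bd[of U "h' t - h t"]
        mult_left_mono[OF xb spec_nn[of dW]] mult_left_mono[OF hb spec_nn[of dU]] by linarith
    finally have A: "norm (?a' - ?a) \<le> K + spec_norm U * norm (h' t - h t)" unfolding K_def by (simp add: algebra_simps)
    have "norm (h' (Suc t) - h (Suc t)) \<le> \<alpha> * norm ((\<chi> i. \<sigma> (?a'$i)) - (\<chi> i. \<sigma> (?a$i))) + \<beta> * norm (h' t - h t)"
      unfolding eq using alpha beta by (smt (verit) norm_scaleR norm_triangle_ineq)
    also have "\<dots> \<le> \<alpha> * (K + spec_norm U * norm (h' t - h t)) + \<beta> * norm (h' t - h t)"
      using alpha sig_vec[OF sigma_lip, of ?a' ?a] A by (intro add_right_mono mult_left_mono) auto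
    finally show ?thesis unfolding q_def by (simp add: algebra_simps)
  qed
  have main: "t \<le> T \<Longrightarrow> norm (h' t - h t) \<le> \<alpha> * K * (\<Sum>j<t. q ^ j)" for t
  proof (induction t)
    case 0 then show ?case by (simp add: h_def h'_def)
  next
    case (Suc t)
    have "norm (h' (Suc t) - h (Suc t)) \<le> \<alpha> * K + q * norm (h' t - h t)"
      using step[of t] Suc.prems by simp
    also have "\<dots> \<le> \<alpha> * K + q * (\<alpha> * K * (\<Sum>j<t. q ^ j))"
      using Suc.IH Suc.prems q0 by (intro add_left_mono mult_left_mono) auto
    also have "\<dots> = \<alpha> * K * (\<Sum>j<Suc t. q ^ j)"
      by (simp only: sum.lessThan_Suc_shift) (simp add: sum_distrib_left[symmetric] algebra_simps)
    finally show ?case .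
  qed
  have P1: "norm (h' T - h T) \<le> \<alpha> * K * (\<Sum>j<T. q ^ j)" using main by simp
  have P2: "norm (h' T - h T) \<le> 2 * \<alpha> * real T * K" if c: "\<alpha> * real T * \<bar>spec_norm U - 1\<bar> \<le> 1"
  proof (cases "T = 0")
    case True then show ?thesis using P1 by simp
  next
    case False
    then have "norm (x T) \<le> Rx" using x_bd[of T] by simp
    then have "0 \<le> Rx" using norm_ge_zero order_trans by blast
    then have K0: "0 \<le> K" unfolding K_def using spec_nn[of dU] spec_nn[of dW] by simp
    have "(\<Sum>j<T. q ^ j) \<le> 2 * real T"
    proof (rule sum_lin[of "\<alpha> * \<bar>spec_norm U - 1\<bar>"])
      show "0 \<le> \<alpha> * \<bar>spec_norm U - 1\<bar>" using alpha by simp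
      show "\<alpha> * \<bar>spec_norm U - 1\<bar> * real T \<le> 1" using c by (simp add: algebra_simps)
      show "0 \<le> q" by (rule q0)
      have "\<alpha> * (spec_norm U - 1) \<le> \<alpha> * \<bar>spec_norm U - 1\<bar>" using alpha by (intro mult_left_mono) auto
      then show "q \<le> 1 + \<alpha> * \<bar>spec_norm U - 1\<bar>" unfolding q_def beta by (simp add: algebra_simps)
    qed
    then have "\<alpha> * K * (\<Sum>j<T. q ^ j) \<le> \<alpha> * K * (2 * real T)"
      using alpha K0 by (intro mult_left_mono) auto
    then show ?thesis using P1 by (simp add: algebra_simps)
  qed
  show ?thesis unfolding h_def[symmetric] h'_def[symmetric] K_def[symmetric] q_def[symmetric]
    using P1 P2 by blast
qed

end
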